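(* Let $\xi(s)=\pi^{-s/2}\Gamma(s/2)\zeta(s)$, $\chi(s)=s(s-1)\xi(s)$, $A=\pi/3-1$, and \[ \begin{aligned} Z_2(s) & = (s-2)\chi(2s) \Bigl[ (As + 3)(s-1)^2\chi(s+2) - 2(s-1)(s-3)\chi(s+1) - (s+2)(s-3)\chi(s) \Bigr] \\ & \quad - (s+1) \chi(2s-1) \Bigl[ (As - A - 3)s^2\chi(s-2) + 2s(s+2) \, \chi(s-1) + (s+2)(s-3)\chi(s) \Bigr]. \end{aligned} \] Then $Z_2(s)$ has no zero in the half-plane $\mathrm{Re}(s)\geq 20$. *)

theory Defs
  imports "HOL-Analysis.Analysis"
begin

(* The series converges
   (absolutely) exactly for Re s > 1; the statement below only evaluates zeta at
   points with real part >= 18, where this is the Riemann zeta function. *)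
definition zeta :: "complex \<Rightarrow> complex" where
  "zeta s = (\<Sum>n. 1 / (of_nat (Suc n)) powr s)"

definition xi :: "complex \<Rightarrow> complex" where
  "xi s = (of_real pi) powr (- s / 2) * Gamma (s / 2) * zeta s"

definition chi :: "complex \<Rightarrow> complex" where
  "chi s = s * (s - 1) * xi s"

definition A_const :: complex where
  "A_const = of_real (pi / 3 - 1)"

definition Z2 :: "complex \<Rightarrow> complex" where
  "Z2 s =
     (s - 2) * chi (2 * s) *
       ((A_const * s + 3) * (s - 1)^2 * chi (s + 2)
        - 2 * (s - 1) * (s - 3) * chi (s + 1)
        - (s + 2) * (s - 3) * chi s)
   - (s + 1) * chi (2 * s - 1) *
       ((A_const * s - A_const - 3) * s^2 * chi (s - 2)
        + 2 * s * (s + 2) * chi (s - 1)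
        + (s + 2) * (s - 3) * chi s)"

end

theory Submission
  imports Defs
begin


lemma Re_pos_not_nonpos_Ints: "Re (z::complex) > 0 \<Longrightarrow> z \<notin> \<int>\<^sub>\<le>\<^sub>0"
  by (auto elim!: nonpos_Ints_cases)

lemma Gamma_ratio_mono:
  fixes z z' :: complex and a :: real
  assumes z: "Re z > 0" and z': "Re z' > 0" and a: "a > 0"
  and cmp: "\<And>k::nat. norm (z' + of_nat k) * norm (z + of_real a + of_nat k)
              \<le> norm (z + of_nat k) * norm (z' + of_real a + of_nat k)"
  shows "norm (Gamma (z' + of_real a) / Gamma z') \<le> norm (Gamma (z + of_real a) / Gamma z)"
proof -
  define f :: "complex \<Rightarrow> nat \<Rightarrow> complex" where "f w n = Gamma_series (w + of_real a) n / Gamma_series w n" for w n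
  have lim: "f w \<longlonglongrightarrow> Gamma (w + of_real a) / Gamma w" if "Re w > 0" for w
    unfolding f_def using that
    by (intro tendsto_divide Gamma_series_LIMSEQ) (auto simp: Gamma_eq_zero_iff Re_pos_not_nonpos_Ints)
  have pne: "pochhammer w m \<noteq> 0" if "Re w > 0" for w :: complex and m
    using that by (auto simp: pochhammer_eq_0_iff)
  have key: "f w n = exp (of_real a * of_real (ln (of_nat n))) * (pochhammer w (n+1) / pochhammer (w + of_real a) (n+1))"
    if "Re w > 0" for w n
  proof -
    have "Re (w + of_real a) > 0" using that a by simp
    from pne[OF this] pne[OF that] show ?thesis
      unfolding f_def Gamma_series_def by (simp add: field_simps distrib_right exp_add)
  qed
  have nq: "norm (pochhammer w m / pochhammer (w + of_real a) m)
      = (\<Prod>k<m. norm (w + of_nat k)) / (\<Prod>k<m. norm (w + of_real a + of_nat k))" for w :: complex and m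
    by (simp add: pochhammer_prod norm_divide prod_norm atLeast0LessThan)
  have le: "norm (f z' n) \<le> norm (f z n)" for n
  proof -
    have pos: "(\<Prod>k<m. norm (w + of_real a + of_nat k)) > 0" if "Re w > 0" for w m
      using that a by (intro prod_pos) (auto simp: complex_eq_iff)
    have "(\<Prod>k<n+1. norm (z' + of_nat k)) * (\<Prod>k<n+1. norm (z + of_real a + of_nat k))
        \<le> (\<Prod>k<n+1. norm (z + of_nat k)) * (\<Prod>k<n+1. norm (z' + of_real a + of_nat k))"
      unfolding prod.distrib[symmetric] by (intro prod_mono conjI cmp) auto
    hence "(\<Prod>k<n+1. norm (z' + of_nat k)) / (\<Prod>k<n+1. norm (z' + of_real a + of_nat k))
        \<le> (\<Prod>k<n+1. norm (z + of_nat k)) / (\<Prod>k<n+1. norm (z + of_real a + of_nat k))"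
      using pos[OF z, of "n+1"] pos[OF z', of "n+1"] by (simp add: divide_simps mult.commute)
    thus ?thesis
      unfolding key[OF z] key[OF z'] norm_mult nq by (intro mult_left_mono) auto
  qed
  show ?thesis
    by (rule LIMSEQ_le[OF tendsto_norm[OF lim[OF z']] tendsto_norm[OF lim[OF z]]]) (use le in auto)
qed

lemma Gamma_half_ratio_lower:
  fixes z :: complex assumes z: "Re z > 1/2"
  shows "sqrt (Re z - 1/2) \<le> norm (Gamma (z + 1/2) / Gamma z)"
proof -
  define x where "x = Re z"
  have x: "x > 1/2" using z x_def by simp
  define u where "u = norm (Gamma (complex_of_real x + of_real (1/2)) / Gamma (of_real x))"
  define v where "v = norm (Gamma (complex_of_real (x - 1/2) + of_real (1/2)) / Gamma (of_real (x - 1/2)))"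
  have h1: "u \<le> norm (Gamma (z + of_real (1/2)) / Gamma z)"
    unfolding u_def
  proof (rule Gamma_ratio_mono)
    show "0 < Re z" "0 < Re (complex_of_real x)" "(0::real) < 1/2" using x x_def by auto
    fix k :: nat
    define c where "c = x + real k"
    have c: "c \<ge> 0" using x c_def by simp
    have e1: "norm (complex_of_real x + of_nat k) = c" using c unfolding c_def
      by (metis abs_of_nonneg norm_of_real of_real_add of_real_of_nat_eq)
    have e2': "complex_of_real x + of_real (1/2) + of_nat k = of_real (c + 1/2)"
      by (simp add: c_def)
    have e2: "norm (complex_of_real x + of_real (1/2) + of_nat k) = c + 1/2"
      unfolding e2' norm_of_real using c by simp
    have e3: "(norm (z + of_nat k))^2 = c^2 + (Im z)^2"
      unfolding cmod_power2 c_def x_def by simp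
    have e4: "(norm (z + of_real (1/2) + of_nat k))^2 = (c+1/2)^2 + (Im z)^2"
      unfolding cmod_power2 c_def x_def by (simp add: algebra_simps)
    have "c^2 * (Im z)^2 \<le> (c+1/2)^2 * (Im z)^2"
      using c by (intro mult_right_mono power_mono) auto
    hence "(c * norm (z + of_real (1/2) + of_nat k))^2 \<le> (norm (z + of_nat k) * (c + 1/2))^2"
      unfolding power_mult_distrib e3 e4 by (simp add: algebra_simps)
    hence "c * norm (z + of_real (1/2) + of_nat k) \<le> norm (z + of_nat k) * (c + 1/2)"
      by (rule power2_le_imp_le) (use c in auto)
    thus "norm (complex_of_real x + of_nat k) * norm (z + of_real (1/2) + of_nat k)
        \<le> norm (z + of_nat k) * norm (complex_of_real x + of_real (1/2) + of_nat k)"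
      unfolding e1 e2 .
  qed
  have h2: "v \<le> u"
    unfolding u_def v_def
  proof (rule Gamma_ratio_mono)
    show "0 < Re (complex_of_real x)" "0 < Re (complex_of_real (x - 1/2))" "(0::real) < 1/2" using x by auto
    fix k :: nat
    have e: "norm (complex_of_real r + of_nat k) = r + real k" if "r \<ge> 0" for r
    proof -
      have eq: "complex_of_real r + of_nat k = of_real (r + real k)" by simp
      show ?thesis using that by (simp only: eq norm_of_real)
    qed
    have e': "complex_of_real r + of_real (1/2) + of_nat k = complex_of_real (r + 1/2) + of_nat k" for r
      by simp
    show "norm (complex_of_real (x - 1/2) + of_nat k) * norm (complex_of_real x + of_real (1/2) + of_nat k)
        \<le> norm (complex_of_real x + of_nat k) * norm (complex_of_real (x - 1/2) + of_real (1/2) + of_nat k)"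
      unfolding e' using x by (subst (1 2 3 4) e) (auto simp: algebra_simps power2_eq_square)
  qed
  have h3: "u * v = x - 1/2"
  proof -
    have nz: "complex_of_real r \<notin> \<int>\<^sub>\<le>\<^sub>0" if "r > 0" for r
      using that by (intro Re_pos_not_nonpos_Ints) simp
    have "Gamma (complex_of_real x + of_real (1/2)) = of_real (x - 1/2) * Gamma (of_real (x - 1/2))"
    proof -
      have "complex_of_real x + of_real (1/2) = of_real (x - 1/2) + 1" by (simp add: algebra_simps)
      thus ?thesis using Gamma_plus1[OF nz[of "x - 1/2"]] x by (simp add: add.commute)
    qed
    moreover have "complex_of_real (x - 1/2) + of_real (1/2) = of_real x" by simp
    moreover have "Gamma (complex_of_real x) \<noteq> 0" "Gamma (complex_of_real (x - 1/2)) \<noteq> 0"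
      by (rule Gamma_nonzero, rule nz, use x in simp)+
    moreover have "cmod (complex_of_real x - 1/2) = x - 1/2"
    proof -
      have eq: "complex_of_real x - 1/2 = of_real (x - 1/2)" by simp
      show ?thesis using x by (simp only: eq norm_of_real)
    qed
    ultimately show ?thesis unfolding u_def v_def using x
      by (simp add: norm_divide norm_mult)
  qed
  have u0: "u \<ge> 0" unfolding u_def by simp
  have "u * v \<le> u * u" using h2 u0 by (rule mult_left_mono)
  hence "x - 1/2 \<le> u^2" using h3 by (simp add: power2_eq_square)
  hence "sqrt (x - 1/2) \<le> sqrt (u^2)" by (rule real_sqrt_le_mono)
  hence "sqrt (x - 1/2) \<le> u" using u0 by simp
  with h1 show ?thesis unfolding x_def by simp
qed

lemma Gamma_half_ratio_upper:
  fixes z :: complex assumes z: "Re z > 0"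
  shows "norm (Gamma (z + 1/2)) * sqrt (Re z) \<le> norm z * norm (Gamma z)"
proof -
  have "sqrt (Re (z + 1/2) - 1/2) \<le> norm (Gamma (z + 1/2 + 1/2) / Gamma (z + 1/2))"
    by (rule Gamma_half_ratio_lower) (use z in simp)
  moreover have "z + 1/2 + 1/2 = z + 1" by simp
  moreover have "Gamma (z + 1) = z * Gamma z"
    by (rule Gamma_plus1) (use z Re_pos_not_nonpos_Ints in auto)
  moreover have "Gamma (z + 1/2) \<noteq> 0"
    using z by (auto simp: Gamma_eq_zero_iff intro!: Re_pos_not_nonpos_Ints)
  ultimately have "sqrt (Re z) \<le> norm z * norm (Gamma z) / norm (Gamma (z + 1/2))"
    by (simp add: norm_divide norm_mult)
  thus ?thesis using \<open>Gamma (z + 1/2) \<noteq> 0\<close> by (simp add: field_simps)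
qed

lemma zeta_close:
  fixes z :: complex assumes z: "Re z \<ge> 18"
  shows "norm (zeta z - 1) \<le> 1/100"
proof -
  define f where "f n = 1 / (of_nat (Suc n) :: complex) powr z" for n
  have nf: "norm (f n) = 1 / real (Suc n) powr Re z" for n
  proof -
    have "norm ((of_nat (Suc n) :: complex) powr z) = real (Suc n) powr Re z"
      by (subst norm_powr_real_powr) auto
    thus ?thesis unfolding f_def by (simp add: norm_divide)
  qed
  define g where "g n = (1/2^16) * (1 / (real n + 1)^2)" for n
  have gs: "g sums ((1/2^16) * (pi^2/6))"
    unfolding g_def by (intro sums_mult) (use inverse_squares_sums in \<open>simp add: add.commute\<close>)
  have bnd: "norm (f (Suc n)) \<le> g n" for n
  proof -
    define m where "m = real n + 2"
    have m: "m \<ge> 2" unfolding m_def by simp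
    have "m powr Re z \<ge> m powr 18" using m z by (intro powr_mono) auto
    moreover have "m powr 18 = m^16 * m^2" using m by (simp add: powr_realpow flip: power_add)
    moreover have "m^16 \<ge> 2^16" using m by (intro power_mono) auto
    moreover have "m^2 \<ge> (real n + 1)^2" unfolding m_def by (intro power_mono) auto
    ultimately have "m powr Re z \<ge> 2^16 * (real n + 1)^2"
      by (smt (verit, best) mult_mono zero_le_power2 zero_le_numeral zero_le_power)
    moreover have "real (Suc (Suc n)) = m" unfolding m_def by simp
    ultimately show ?thesis unfolding nf g_def using m
      by (simp add: field_simps)
  qed
  have sg: "summable g" using gs sums_summable by blast
  have snf: "summable (\<lambda>n. norm (f (Suc n)))"
    by (rule summable_comparison_test[OF _ sg]) (use bnd in auto)
  have sf: "summable f"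
    using snf by (subst summable_Suc_iff[symmetric]) (rule summable_norm_cancel)
  have f0: "f 0 = 1" unfolding f_def by simp
  have "zeta z - 1 = (\<Sum>n. f (Suc n))"
    using suminf_split_head[OF sf] f0 unfolding zeta_def f_def by simp
  hence "norm (zeta z - 1) \<le> (\<Sum>n. norm (f (Suc n)))"
    using summable_norm[OF snf] by simp
  also have "\<dots> \<le> (\<Sum>n. g n)"
    by (rule suminf_le) (use bnd snf sg in auto)
  also have "\<dots> = (1/2^16) * (pi^2/6)" using gs sums_unique by metis
  also have "\<dots> \<le> 1/100"
  proof -
    have "pi * pi \<le> 4 * 4" using pi_less_4 pi_gt3 by (intro mult_mono) auto
    thus ?thesis by (simp add: power2_eq_square)
  qed
  finally show ?thesis .
qed

lemma pi_powr_shift: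
  "complex_of_real pi powr (e1 + e2 + of_nat j / 2) =
     complex_of_real pi powr e1 * complex_of_real pi powr e2 * (complex_of_real pi powr (1/2)) ^ j"
proof (induction j)
  case 0 thus ?case by (simp add: powr_add)
next
  case (Suc j)
  have "e1 + e2 + of_nat (Suc j) / 2 = (e1 + e2 + of_nat j / 2) + 1/2"
    by (simp add: field_simps)
  hence "complex_of_real pi powr (e1 + e2 + of_nat (Suc j) / 2) =
      complex_of_real pi powr (e1 + e2 + of_nat j / 2) * complex_of_real pi powr (1/2)"
    by (simp only: powr_add)
  thus ?case using Suc.IH by simp
qed

lemma Z2_expand:
  fixes s :: complex
  assumes s: "Re s \<ge> 20"
  defines "P0 \<equiv> complex_of_real pi powr (-(s+2)/2)"
  defines "q \<equiv> complex_of_real pi powr (1/2)"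
  defines "g1 \<equiv> Gamma (s/2)" and "h1 \<equiv> Gamma (s/2 + 1/2)"
  defines "Gs \<equiv> Gamma s" and "K \<equiv> Gamma (s - 1/2)"
  shows "Z2 s = P0^3 * q^4 * (2* s-1) *
    (2* s*(s-2)*Gs*zeta(2* s)*
       ((A_const* s+3)*(s-1)^2*(s+2)*(s+1)*(s/2)*g1*zeta(s+2)
        - 2*(s-1)*(s-3)*(s+1)* s*q*h1*zeta(s+1)
        - (s+2)*(s-3)* s*(s-1)*q^2*g1*zeta s)
     - (s+1)*(2* s-2)*K*zeta(2* s-1)*q^3*
       (2*(A_const* s-A_const-3)* s^2*(s-3)*q^2*g1*zeta(s-2)
        + 4* s*(s+2)*(s-2)*q*h1*zeta(s-1)
        + (s+2)*(s-3)* s*(s-1)*g1*zeta s))"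
proof -
  have E: "complex_of_real pi powr w = P0 * P0 ^ i * q ^ j"
    if "w = -(s+2)/2 + of_nat i * (-(s+2)/2) + of_nat j / 2" for w i j
  proof -
    have "complex_of_real pi powr (of_nat i * (-(s+2)/2)) = P0 ^ i"
    proof (induction i)
      case (Suc i)
      have "of_nat (Suc i) * (-(s+2)/2) = (-(s+2)/2) + of_nat i * (-(s+2)/2)"
        by (subst of_nat_Suc) (simp only: distrib_right mult_1 add.commute)
      hence "complex_of_real pi powr (of_nat (Suc i) * (-(s+2)/2)) =
          P0 * complex_of_real pi powr (of_nat i * (-(s+2)/2))"
        unfolding P0_def by (simp only: powr_add)
      thus ?case using Suc.IH by simp
    qed simp
    thus ?thesis unfolding that pi_powr_shift P0_def q_def by simp
  qed
  have nz: "z \<notin> \<int>\<^sub>\<le>\<^sub>0" if "Re z > 0" for z :: complex using that by (rule Re_pos_not_nonpos_Ints)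
  define g0 where "g0 = Gamma ((s-2)/2)"
  define h0 where "h0 = Gamma ((s-1)/2)"
  have g1: "g1 = ((s-2)/2) * g0"
  proof -
    have "Gamma ((s-2)/2 + 1) = ((s-2)/2) * g0" unfolding g0_def by (rule Gamma_plus1, rule nz) (use s in simp)
    moreover have "(s-2)/2 + 1 = s/2" by (simp add: field_simps)
    ultimately show ?thesis unfolding g1_def by simp
  qed
  have h1: "h1 = ((s-1)/2) * h0"
  proof -
    have "Gamma ((s-1)/2 + 1) = ((s-1)/2) * h0" unfolding h0_def by (rule Gamma_plus1, rule nz) (use s in simp)
    moreover have "(s-1)/2 + 1 = s/2 + 1/2" by (simp add: field_simps)
    ultimately show ?thesis unfolding h1_def by simp
  qed
  have g2: "Gamma ((s+2)/2) = (s/2) * g1"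
  proof -
    have eq: "(s+2)/2 = s/2 + 1" by (simp add: field_simps)
    show ?thesis unfolding eq g1_def by (rule Gamma_plus1, rule nz) (use s in simp)
  qed
  have h2: "Gamma ((s+1)/2) = h1" unfolding h1_def by (simp add: field_simps)
  have G2: "Gamma ((2 * s)/2) = Gs" unfolding Gs_def by simp
  have K2: "Gamma ((2 * s - 1)/2) = K" unfolding K_def by (simp add: field_simps)
  have p0: "complex_of_real pi powr (- s / 2) = P0 * P0^0 * q^2" by (rule E) (simp add: field_simps)
  have p1: "complex_of_real pi powr (- (s+1) / 2) = P0 * P0^0 * q^1" by (rule E) (simp add: field_simps)
  have p2: "complex_of_real pi powr (- (s+2) / 2) = P0 * P0^0 * q^0" by (rule E) (simp add: field_simps)
  have pm1: "complex_of_real pi powr (- (s-1) / 2) = P0 * P0^0 * q^3" by (rule E) (simp add: field_simps)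
  have pm2: "complex_of_real pi powr (- (s-2) / 2) = P0 * P0^0 * q^4" by (rule E) (simp add: field_simps)
  have q0: "complex_of_real pi powr (- (2 * s) / 2) = P0 * P0^1 * q^4" by (rule E) (simp add: field_simps)
  have q1: "complex_of_real pi powr (- (2 * s - 1) / 2) = P0 * P0^1 * q^5" by (rule E) (simp add: field_simps)
  have c0: "chi s = s*(s-1)*(P0*q^2)*g1*zeta s"
    unfolding chi_def xi_def p0 g1_def[symmetric] by simp
  have c1: "chi (s+1) = (s+1)* s*(P0*q)*h1*zeta (s+1)"
    unfolding chi_def xi_def p1 h2 by simp
  have c2: "chi (s+2) = (s+2)*(s+1)*P0*((s/2)*g1)*zeta (s+2)"
    unfolding chi_def xi_def p2 g2 by (simp add: algebra_simps)
  have cm1: "chi (s-1) = (s-1)*(s-2)*(P0*q^3)*h0*zeta (s-1)"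
    unfolding chi_def xi_def pm1 h0_def[symmetric] by (simp add: algebra_simps)
  have cm2: "chi (s-2) = (s-2)*(s-3)*(P0*q^4)*g0*zeta (s-2)"
    unfolding chi_def xi_def pm2 g0_def[symmetric] by (simp add: algebra_simps)
  have d0: "chi (2 * s) = (2 * s)*(2 * s-1)*(P0*P0*q^4)*Gs*zeta (2 * s)"
    unfolding chi_def xi_def q0 G2 by (simp add: algebra_simps)
  have d1: "chi (2 * s-1) = (2 * s-1)*(2 * s-2)*(P0*P0*q^5)*K*zeta (2 * s-1)"
    unfolding chi_def xi_def q1 K2 by (simp add: algebra_simps)
  show ?thesis
    unfolding Z2_def c0 c1 c2 cm1 cm2 d0 d1 g1 h1 by (simp add: field_simps) algebra
qed



lemma norm_minus_shift_le:
  fixes s :: complex assumes "0 \<le> c" "c \<le> Re s"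
  shows "norm (s - of_real c) \<le> norm s"
proof -
  have "(norm (s - of_real c))^2 \<le> (norm s)^2"
    unfolding cmod_power2 using assms by (simp add: power_mono)
  thus ?thesis by (rule power2_le_imp_le) simp
qed

lemma norm_plus_shift_ge:
  fixes s :: complex assumes "0 \<le> c" "0 \<le> Re s"
  shows "norm s \<le> norm (s + of_real c)"
proof -
  have "(norm s)^2 \<le> (norm (s + of_real c))^2"
    unfolding cmod_power2 using assms by (simp add: power_mono)
  thus ?thesis by (rule power2_le_imp_le) simp
qed

lemma shift_bounds:
  fixes s :: complex assumes s: "Re s \<ge> 20"
  shows "0.95 * norm s \<le> norm (s - 1)" "norm (s - 1) \<le> norm s"
    "0.9 * norm s \<le> norm (s - 2)" "norm (s - 2) \<le> norm s"
    "norm (s - 3) \<le> norm s"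
    "norm s \<le> norm (s + 1)" "norm (s + 1) \<le> 1.05 * norm s"
    "norm s \<le> norm (s + 2)" "norm (s + 2) \<le> 1.1 * norm s"
proof -
  have t: "norm s \<ge> 20" using s abs_Re_le_cmod[of s] by linarith
  show "norm (s - 1) \<le> norm s" using norm_minus_shift_le[of 1 s] s by simp
  show "norm (s - 2) \<le> norm s" using norm_minus_shift_le[of 2 s] s by simp
  show "norm (s - 3) \<le> norm s" using norm_minus_shift_le[of 3 s] s by simp
  show "norm s \<le> norm (s + 1)" using norm_plus_shift_ge[of 1 s] s by simp
  show "norm s \<le> norm (s + 2)" using norm_plus_shift_ge[of 2 s] s by simp
  have "norm s - norm (1::complex) \<le> norm (s - 1)" by (rule norm_triangle_ineq2)
  thus "0.95 * norm s \<le> norm (s - 1)" using t by simp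
  have "norm s - norm (2::complex) \<le> norm (s - 2)" by (rule norm_triangle_ineq2)
  thus "0.9 * norm s \<le> norm (s - 2)" using t by simp
  have "norm (s + 1) \<le> norm s + norm (1::complex)" by (rule norm_triangle_ineq)
  thus "norm (s + 1) \<le> 1.05 * norm s" using t by simp
  have "norm (s + 2) \<le> norm s + norm (2::complex)" by (rule norm_triangle_ineq)
  thus "norm (s + 2) \<le> 1.1 * norm s" using t by simp
qed

lemma zeta_bounds:
  fixes z :: complex assumes "Re z \<ge> 18"
  shows "norm (zeta z) \<le> 1.01" "0.99 \<le> norm (zeta z)"
proof -
  have d: "norm (zeta z - 1) \<le> 1/100" by (rule zeta_close) fact
  have "norm (zeta z) \<le> norm (zeta z - 1) + norm (1::complex)"
    using norm_triangle_ineq[of "zeta z - 1" 1] by simp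
  thus "norm (zeta z) \<le> 1.01" using d by simp
  have "norm (1::complex) - norm (1 - zeta z) \<le> norm (zeta z)"
    using norm_triangle_ineq2[of 1 "1 - zeta z"] by simp
  thus "0.99 \<le> norm (zeta z)" using d by (simp add: norm_minus_commute)
qed

lemma A_bounds:
  fixes s :: complex assumes s: "Re s \<ge> 20"
  shows "3.94 \<le> norm (A_const * s + 3)"
    "norm (A_const * s - A_const - 3) \<le> 2.54 * norm (A_const * s + 3)"
proof -
  have pi1: "3.141 \<le> pi" "pi \<le> 3.15" using pi_approx by auto
  have Ar: "A_const = of_real (pi/3 - 1)" by (simp add: A_const_def)
  have "Re (A_const * s + 3) = (pi/3 - 1) * Re s + 3" unfolding Ar by simp
  moreover have "(pi/3 - 1) * Re s \<ge> (pi/3 - 1) * 20"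
    using s pi1 by (intro mult_left_mono) auto
  ultimately have "Re (A_const * s + 3) \<ge> 3.94" using pi1 by simp
  thus a: "3.94 \<le> norm (A_const * s + 3)" using complex_Re_le_cmod[of "A_const * s + 3"] by linarith
  have "A_const * s - A_const - 3 = (A_const * s + 3) - (A_const + 6)" by simp
  hence "norm (A_const * s - A_const - 3) \<le> norm (A_const * s + 3) + norm (A_const + 6)"
    using norm_triangle_ineq4 by metis
  moreover have "norm (A_const + 6) = pi/3 + 5"
  proof -
    have "A_const + 6 = of_real (pi/3 + 5)" unfolding Ar by simp
    thus ?thesis using pi1 by (simp only: norm_of_real) simp
  qed
  ultimately show "norm (A_const * s - A_const - 3) \<le> 2.54 * norm (A_const * s + 3)"
    using a pi1 by simp
qed

lemma gamma_bounds:
  fixes s :: complex assumes s: "Re s \<ge> 20"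
  shows "norm (Gamma (s/2 + 1/2)) \<le> norm (Gamma (s/2)) * norm s / 6"
    "4 * norm (Gamma (s - 1/2)) \<le> norm (Gamma s)"
    "Gamma (s/2) \<noteq> 0" "Gamma (s - 1/2) \<noteq> 0"
proof -
  show nz1: "Gamma (s/2) \<noteq> 0" by (rule Gamma_nonzero, rule Re_pos_not_nonpos_Ints) (use s in simp)
  show nz2: "Gamma (s - 1/2) \<noteq> 0" by (rule Gamma_nonzero, rule Re_pos_not_nonpos_Ints) (use s in simp)
  have u: "norm (Gamma (s/2 + 1/2)) * sqrt (Re (s/2)) \<le> norm (s/2) * norm (Gamma (s/2))"
    by (rule Gamma_half_ratio_upper) (use s in simp)
  have "sqrt 9 \<le> sqrt (Re (s/2))" using s by (intro real_sqrt_le_mono) simp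
  hence "3 \<le> sqrt (Re (s/2))" by simp
  hence "norm (Gamma (s/2 + 1/2)) * 3 \<le> norm (Gamma (s/2 + 1/2)) * sqrt (Re (s/2))"
    by (intro mult_left_mono) auto
  moreover have u': "norm (Gamma (s/2 + 1/2)) * sqrt (Re (s/2)) \<le> norm s / 2 * norm (Gamma (s/2))"
    using u by (simp add: norm_divide)
  ultimately have "norm (Gamma (s/2 + 1/2)) * 3 \<le> norm s / 2 * norm (Gamma (s/2))"
    by (rule order.trans)
  thus "norm (Gamma (s/2 + 1/2)) \<le> norm (Gamma (s/2)) * norm s / 6"
    by (simp add: field_simps ac_simps)
  have l: "sqrt (Re (s - 1/2) - 1/2) \<le> norm (Gamma (s - 1/2 + 1/2) / Gamma (s - 1/2))"
    by (rule Gamma_half_ratio_lower) (use s in simp)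
  have "sqrt 16 \<le> sqrt (Re (s - 1/2) - 1/2)" using s by (intro real_sqrt_le_mono) simp
  hence "4 \<le> norm (Gamma s / Gamma (s - 1/2))" using l by simp
  thus "4 * norm (Gamma (s - 1/2)) \<le> norm (Gamma s)" using nz2 by (simp add: norm_divide field_simps)
qed

lemma q_bounds:
  defines "q \<equiv> complex_of_real pi powr (1/2)"
  shows "q \<noteq> 0" "norm q \<le> 1.78" "norm (q^2) \<le> 3.15" "norm (q^3) \<le> 5.64"
proof -
  have nq: "norm q = sqrt pi" unfolding q_def
    by (subst norm_powr_real_powr) (auto simp: powr_half_sqrt)
  thus "q \<noteq> 0" by auto
  have pi1: "pi \<le> 3.15" using pi_approx by auto
  have "sqrt pi \<le> sqrt (1.78^2)" using pi1 by (intro real_sqrt_le_mono) (simp add: power2_eq_square)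
  hence sq: "sqrt pi \<le> 1.78" by simp
  thus "norm q \<le> 1.78" using nq by simp
  show "norm (q^2) \<le> 3.15" using pi1 by (simp add: norm_power nq)
  have "norm (q^3) = pi * sqrt pi" by (simp add: norm_mult nq power3_eq_cube)
  also have "\<dots> \<le> 3.15 * 1.78" using pi1 sq by (intro mult_mono) auto
  finally show "norm (q^3) \<le> 5.64" by simp
qed

theorem proposition6p4:
  fixes s :: complex
  assumes "Re s \<ge> 20"
  shows "Z2 s \<noteq> 0"
proof -
  note s = assms
  define t where "t = norm s"
  have t20: "t \<ge> 20" using s abs_Re_le_cmod[of s] unfolding t_def by linarith
  define P0 where "P0 = complex_of_real pi powr (-(s+2)/2)"
  define q where "q = complex_of_real pi powr (1/2)"
  define g1 where "g1 = Gamma (s/2)"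
  define h1 where "h1 = Gamma (s/2 + 1/2)"
  define Gs where "Gs = Gamma s"
  define K where "K = Gamma (s - 1/2)"
  define M1 where "M1 = (A_const * s+3)*(s-1)^2*(s+2)*(s+1)*(s/2)*g1*zeta(s+2)"
  define N1 where "N1 = 2*(s-1)*(s-3)*(s+1)* s *q*h1*zeta(s+1)"
  define O1 where "O1 = (s+2)*(s-3)* s *(s-1)*q^2*g1*zeta s"
  define M2 where "M2 = 2*(A_const * s-A_const-3)* s^2*(s-3)*q^2*g1*zeta(s-2)"
  define N2 where "N2 = 4 * s *(s+2)*(s-2)*q*h1*zeta(s-1)"
  define O2 where "O2 = (s+2)*(s-3)* s *(s-1)*g1*zeta s"
  define T1 where "T1 = 2 * s *(s-2)*Gs*zeta(2 * s)*(M1 - N1 - O1)"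
  define T2 where "T2 = (s+1)*(2 * s-2)*K*zeta(2 * s-1)*q^3*(M2 + N2 + O2)"
  have Z: "Z2 s = P0^3 * q^4 * (2 * s-1) * (T1 - T2)"
    using Z2_expand[OF s] unfolding P0_def q_def g1_def h1_def Gs_def K_def M1_def N1_def
      O1_def M2_def N2_def O2_def T1_def T2_def .
  define a1 where "a1 = norm (A_const * s + 3)"
  define g where "g = norm g1"
  define k where "k = norm K"
  have a1: "(394/100) \<le> a1" and aA: "norm (A_const * s - A_const - 3) \<le> (254/100) * a1"
    using A_bounds[OF s] unfolding a1_def by auto
  have g: "g > 0" and k: "k > 0" and hb: "norm h1 \<le> g * t / 6" and Gb: "4 * k \<le> norm Gs"
    using gamma_bounds[OF s] unfolding g_def k_def g1_def h1_def Gs_def K_def t_def by auto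
  note sb = shift_bounds[OF s, folded t_def]
  have qb: "q \<noteq> 0" "norm q \<le> (178/100)" "norm (q^2) \<le> (315/100)" "norm (q^3) \<le> (564/100)"
    using q_bounds unfolding q_def by auto
  have zs: "norm (zeta s) \<le> (101/100)"
    using zeta_bounds[of s] s by simp
  have zp1: "norm (zeta (s+1)) \<le> (101/100)"
    using zeta_bounds[of "s+1"] s by simp
  have zp2: "(99/100) \<le> norm (zeta (s+2))"
    using zeta_bounds[of "s+2"] s by simp
  have zm1: "norm (zeta (s-1)) \<le> (101/100)"
    using zeta_bounds[of "s-1"] s by simp
  have zm2: "norm (zeta (s-2)) \<le> (101/100)"
    using zeta_bounds[of "s-2"] s by simp
  have zd0: "(99/100) \<le> norm (zeta (2 * s))"
    using zeta_bounds[of "2 * s"] s by simp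
  have zd1: "norm (zeta (2 * s - 1)) \<le> (101/100)"
    using zeta_bounds[of "2 * s - 1"] s by simp
  have nn: "0 \<le> norm (x::complex)" for x by simp
  have n2: "norm (2 * s - 2) = 2 * norm (s - 1)"
  proof -
    have e: "2 * s - 2 = 2 * (s - 1)" by simp
    have "norm (2 * (s - 1)) = 2 * norm (s - 1)" by (simp only: norm_mult) simp
    thus ?thesis by (simp only: e)
  qed
  define X5 where "X5 = g * (t*t*t*t*t)"
  define Y4 where "Y4 = g * (t*t*t*t)"
  define Y3 where "Y3 = g * (t*t*t)"
  have X5Y4: "X5 = Y4 * t" and Y4Y3: "Y4 = Y3 * t" unfolding X5_def Y4_def Y3_def by (simp_all add: ac_simps)
  have Y3p: "Y3 > 0" using g t20 unfolding Y3_def by simp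
  have Y4p: "Y4 > 0" using Y3p t20 Y4Y3 by simp
  have X5p: "X5 > 0" using Y4p t20 X5Y4 by simp
  have M1b: "(44/100) * (a1 * X5) \<le> norm M1"
  proof -
    have "norm M1 = a1 * norm (s-1)^2 * norm (s+2) * norm (s+1) * (t/2) * g * norm (zeta (s+2))"
      unfolding M1_def a1_def g_def t_def by (simp add: norm_mult norm_power norm_divide)
    moreover have "a1 * ((95/100)*t)^2 * t * t * (t/2) * g * (99/100) \<le>
        a1 * norm (s-1)^2 * norm (s+2) * norm (s+1) * (t/2) * g * norm (zeta (s+2))"
      by (intro mult_mono' power_mono order.refl) (use sb t20 a1 g zp2 in auto)
    moreover have "a1 * ((95/100)*t)^2 * t * t * (t/2) * g * (99/100) = (4467375/10000000) * (a1 * X5)"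
      unfolding X5_def by (simp add: field_simps power2_eq_square)
    moreover have "a1 * X5 \<ge> 0" using a1 X5p by simp
    ultimately show ?thesis by linarith
  qed
  have N1b: "norm N1 \<le> (63/100) * X5"
  proof -
    have "norm N1 = 2 * norm (s-1) * norm (s-3) * norm (s+1) * t * norm q * norm h1 * norm (zeta (s+1))"
      unfolding N1_def t_def by (simp add: norm_mult n2)
    moreover have "2 * norm (s-1) * norm (s-3) * norm (s+1) * t * norm q * norm h1 * norm (zeta (s+1))
        \<le> 2 * t * t * ((105/100)*t) * t * (178/100) * (g * t / 6) * (101/100)"
      by (intro mult_mono' order.refl) (use sb t20 g qb hb zp1 in auto)
    moreover have "2 * t * t * ((105/100)*t) * t * (178/100) * (g * t / 6) * (101/100) = (62923/100000) * X5"
      unfolding X5_def by (simp add: field_simps)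
    ultimately show ?thesis using X5p by linarith
  qed
  have O1b: "norm O1 \<le> (349965/100000) * Y4"
  proof -
    have "norm O1 = norm (s+2) * norm (s-3) * t * norm (s-1) * norm (q^2) * g * norm (zeta s)"
      unfolding O1_def t_def g_def by (simp add: norm_mult del: norm_power)
    moreover have "norm (s+2) * norm (s-3) * t * norm (s-1) * norm (q^2) * g * norm (zeta s)
        \<le> ((11/10)*t) * t * t * t * (315/100) * g * (101/100)"
      by (intro mult_mono' order.refl) (use sb t20 g qb zs in auto)
    moreover have "((11/10)*t) * t * t * t * (315/100) * g * (101/100) = (349965/100000) * Y4"
      unfolding Y4_def by (simp add: field_simps)
    ultimately show ?thesis by linarith
  qed
  have B1b: "(23/100) * (a1 * X5) \<le> norm (M1 - N1 - O1)"
  proof -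
    have "norm M1 \<le> norm (M1 - N1 - O1) + norm N1 + norm O1"
      using norm_triangle_ineq[of "M1 - N1 - O1 + N1" O1] norm_triangle_ineq[of "M1 - N1 - O1" N1]
      by simp
    moreover have "a1 * X5 \<ge> (394/100) * X5" using a1 X5p by (intro mult_right_mono) auto
    moreover have "X5 \<ge> 20 * Y4" unfolding X5Y4 using t20 Y4p by simp
    ultimately show ?thesis using M1b N1b O1b Y4p by linarith
  qed
  define V where "V = k * t * t * (a1 * Y4)"
  have Vp: "V > 0" unfolding V_def using k t20 a1 Y4p by simp
  have T1b: "(163944/100000) * (V * t) \<le> norm T1"
  proof -
    have "norm T1 = 2 * t * norm (s-2) * norm Gs * norm (zeta (2 * s)) * norm (M1 - N1 - O1)"
      unfolding T1_def t_def by (simp add: norm_mult)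
    moreover have "2 * t * ((9/10)*t) * (4*k) * (99/100) * ((23/100) * (a1 * X5)) \<le>
        2 * t * norm (s-2) * norm Gs * norm (zeta (2 * s)) * norm (M1 - N1 - O1)"
      by (intro mult_mono' order.refl) (use sb t20 k Gb zd0 B1b a1 X5p in auto)
    moreover have "2 * t * ((9/10)*t) * (4*k) * (99/100) * ((23/100) * (a1 * X5)) = (163944/100000) * (V * t)"
      unfolding V_def X5Y4 by (simp add: field_simps)
    ultimately show ?thesis by linarith
  qed
  have M2b: "norm M2 \<le> (1616202/100000) * (a1 * Y3)"
  proof -
    have "norm M2 = 2 * norm (A_const * s - A_const - 3) * t^2 * norm (s-3) * norm (q^2) * g * norm (zeta (s-2))"
      unfolding M2_def t_def g_def by (simp only: norm_mult norm_power) simp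
    moreover have "2 * norm (A_const * s - A_const - 3) * t^2 * norm (s-3) * norm (q^2) * g * norm (zeta (s-2))
        \<le> 2 * ((254/100) * a1) * t^2 * t * (315/100) * g * (101/100)"
      by (intro mult_mono' order.refl) (use sb t20 g qb zm2 aA in auto)
    moreover have "2 * ((254/100) * a1) * t^2 * t * (315/100) * g * (101/100) = (1616202/100000) * (a1 * Y3)"
      unfolding Y3_def by (simp add: field_simps power2_eq_square)
    ultimately show ?thesis by linarith
  qed
  have N2b: "norm N2 \<le> (132/100) * Y4"
  proof -
    have "norm N2 = 4 * t * norm (s+2) * norm (s-2) * norm q * norm h1 * norm (zeta (s-1))"
      unfolding N2_def t_def by (simp add: norm_mult)
    moreover have "4 * t * norm (s+2) * norm (s-2) * norm q * norm h1 * norm (zeta (s-1))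
        \<le> 4 * t * ((11/10)*t) * t * (178/100) * (g * t / 6) * (101/100)"
      by (intro mult_mono' order.refl) (use sb t20 g qb hb zm1 in auto)
    moreover have "4 * t * ((11/10)*t) * t * (178/100) * (g * t / 6) * (101/100) = ((791032/100000) / 6) * Y4"
      unfolding Y4_def by (simp add: field_simps)
    ultimately show ?thesis using Y4p by linarith
  qed
  have O2b: "norm O2 \<le> (1111/1000) * Y4"
  proof -
    have "norm O2 = norm (s+2) * norm (s-3) * t * norm (s-1) * g * norm (zeta s)"
      unfolding O2_def t_def g_def by (simp add: norm_mult)
    moreover have "norm (s+2) * norm (s-3) * t * norm (s-1) * g * norm (zeta s)
        \<le> ((11/10)*t) * t * t * t * g * (101/100)"
      by (intro mult_mono' order.refl) (use sb t20 g zs in auto)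
    moreover have "((11/10)*t) * t * t * t * g * (101/100) = (1111/1000) * Y4"
      unfolding Y4_def by (simp add: field_simps)
    ultimately show ?thesis by linarith
  qed
  have B2b: "norm (M2 + N2 + O2) \<le> (145/100) * (a1 * Y4)"
  proof -
    have "norm (M2 + N2 + O2) \<le> norm M2 + norm N2 + norm O2"
      using norm_triangle_ineq[of "M2 + N2" O2] norm_triangle_ineq[of M2 N2] by simp
    moreover have "a1 * Y4 \<ge> 20 * (a1 * Y3)" unfolding Y4Y3 using t20 a1 Y3p
      by (simp add: mult.assoc[symmetric])
    moreover have "a1 * Y4 \<ge> (394/100) * Y4" using a1 Y4p by (intro mult_right_mono) auto
    ultimately show ?thesis using M2b N2b O2b Y4p a1 mult_nonneg_nonneg[of a1 Y4] by linarith
  qed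
  have T2b: "norm T2 \<le> (17345538/1000000) * V"
  proof -
    have "norm T2 = norm (s+1) * (2 * norm (s-1)) * k * norm (zeta (2 * s - 1)) * norm (q^3) * norm (M2 + N2 + O2)"
      unfolding T2_def k_def by (simp only: norm_mult n2)
    moreover have "norm (s+1) * (2 * norm (s-1)) * k * norm (zeta (2 * s - 1)) * norm (q^3) * norm (M2 + N2 + O2)
        \<le> ((105/100)*t) * (2*t) * k * (101/100) * (564/100) * ((145/100) * (a1 * Y4))"
      by (intro mult_mono' order.refl) (use sb t20 k qb zd1 B2b in auto)
    moreover have "((105/100)*t) * (2*t) * k * (101/100) * (564/100) * ((145/100) * (a1 * Y4)) = (17345538/1000000) * V"
      unfolding V_def by (simp add: field_simps)
    ultimately show ?thesis by linarith
  qed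
  have "V * t \<ge> 20 * V" using Vp t20 by simp
  hence "norm T2 < norm T1" using T1b T2b Vp by linarith
  hence "T1 \<noteq> T2" by auto
  moreover have "P0 \<noteq> 0" unfolding P0_def powr_def by simp
  moreover have "2 * s - 1 \<noteq> 0"
  proof
    assume "2 * s - 1 = 0"
    hence "Re (2 * s - 1) = 0" by simp
    thus False using s by simp
  qed
  ultimately show ?thesis unfolding Z using qb by simp
qed

end
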